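(* Let $\delta$ be a diagonal section and let $C$ be any bivariate copula with $C(t,t)=\delta(t)$ for all $t\in[0,1]$. Then for every $x,y\in[0,1]$, $$C(x,y)\le \min\left\{x,\;y,\;\max\{x,y\}-\frac12\left(\widehat{\delta}(x)+\widehat{\delta}(y)+\mathrm{TV}_{\min\{x,y\}}^{\max\{x,y\}}(\widehat{\delta})\right)\right\}.$$
   Context: $\mathbb{I}=[0,1]$. A (bivariate) copula is a function $C\colon\mathbb{I}^2\to\mathbb{I}$ with $C(x,0)=C(0,y)=0$, $C(x,1)=x$, $C(1,y)=y$ for all $x,y$, and $C(b,d)+C(a,c)-C(b,c)-C(a,d)\ge 0$ for all $a\le b$, $c\le d$ in $\mathbb{I}$. A diagonal section is a function $\delta\colon\mathbb{I}\to\mathbb{I}$ with $\delta(x)\le x$ for all $x$, $0\le\delta(y)-\delta(x)\le 2(y-x)$ whenever $x\le y$, and $\delta(1)=1$ (equivalently, $\delta$ is the diagonal $t\mapsto C(t,t)$ of some copula). Write $\widehat{\delta}(x)=x-\delta(x)$. For $f\colon\mathbb{I}\to\mathbb{R}$ and $0\le x\le y\le1$, $\mathrm{TV}_x^y(f)=\sup\{\sum_{i=1}^n|f(x_i)-f(x_{i-1})|: x=x_0<x_1<\dots<x_n=y\}$ is the total variation of $f$ on $[x,y]$. *)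

theory Defs
  imports "HOL-Analysis.Analysis"
begin

definition is_copula :: "(real \<Rightarrow> real \<Rightarrow> real) \<Rightarrow> bool" where
  "is_copula C \<longleftrightarrow>
     (\<forall>x. 0 \<le> x \<and> x \<le> 1 \<longrightarrow> C x 0 = 0 \<and> C 0 x = 0 \<and> C x 1 = x \<and> C 1 x = x) \<and>
     (\<forall>a b c d. 0 \<le> a \<and> a \<le> b \<and> b \<le> 1 \<and> 0 \<le> c \<and> c \<le> d \<and> d \<le> 1 \<longrightarrow>
        C b d + C a c - C b c - C a d \<ge> 0)"

definition is_diagonal_section :: "(real \<Rightarrow> real) \<Rightarrow> bool" where
  "is_diagonal_section \<delta> \<longleftrightarrow>
     (\<forall>x. 0 \<le> x \<and> x \<le> 1 \<longrightarrow> \<delta> x \<le> x) \<and>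
     (\<forall>x y. 0 \<le> x \<and> x \<le> y \<and> y \<le> 1 \<longrightarrow> 0 \<le> \<delta> y - \<delta> x \<and> \<delta> y - \<delta> x \<le> 2 * (y - x)) \<and>
     \<delta> 1 = 1"

definition delta_hat :: "(real \<Rightarrow> real) \<Rightarrow> real \<Rightarrow> real" where
  "delta_hat \<delta> x = x - \<delta> x"

definition total_variation :: "(real \<Rightarrow> real) \<Rightarrow> real \<Rightarrow> real \<Rightarrow> real" where
  "total_variation f x y = Sup {(\<Sum>i\<in>{1..n}. \<bar>f (p i) - f (p (i - 1))\<bar>) | p n.
      p 0 = x \<and> p n = y \<and> (\<forall>i<n. p i < p (Suc i))}"

end

theory Submission
  imports Defs
begin

lemma tele:
  fixes f g :: "real \<Rightarrow> real" and p :: "nat \<Rightarrow> real"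
  assumes mono: "\<forall>i<n. p i \<le> p (Suc i)"
    and inS: "\<forall>i\<le>n. p i \<in> S"
    and step: "\<And>a b. a \<in> S \<Longrightarrow> b \<in> S \<Longrightarrow> a \<le> b \<Longrightarrow> \<bar>f b - f a\<bar> \<le> 2*(g b - g a) - (f b - f a)"
  shows "(\<Sum>i\<in>{1..n}. \<bar>f (p i) - f (p (i-1))\<bar>) \<le> 2*(g (p n) - g (p 0)) - (f (p n) - f (p 0))"
  using mono inS
proof (induction n)
  case 0
  then show ?case by simp
next
  case (Suc n)
  have ih: "(\<Sum>i\<in>{1..n}. \<bar>f (p i) - f (p (i-1))\<bar>) \<le> 2*(g (p n) - g (p 0)) - (f (p n) - f (p 0))"
    using Suc by auto
  have "\<bar>f (p (Suc n)) - f (p n)\<bar> \<le> 2*(g (p (Suc n)) - g (p n)) - (f (p (Suc n)) - f (p n))"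
    using Suc.prems by (intro step) auto
  then show ?case using ih by (simp add: sum.cl_ivl_Suc)
qed

lemma main_le:
  fixes \<delta> :: "real \<Rightarrow> real" and C :: "real \<Rightarrow> real \<Rightarrow> real" and x y :: real
  assumes cop: "is_copula C"
    and diag: "\<forall>t. 0 \<le> t \<and> t \<le> 1 \<longrightarrow> C t t = \<delta> t"
    and "0 \<le> x" "x \<le> y" "y \<le> 1"
  shows "C x y \<le> y - (delta_hat \<delta> x + delta_hat \<delta> y + total_variation (delta_hat \<delta>) x y) / 2"
proof -
  have bd: "\<And>a. 0 \<le> a \<Longrightarrow> a \<le> 1 \<Longrightarrow> C a 0 = 0 \<and> C 0 a = 0 \<and> C a 1 = a \<and> C 1 a = a"
    using cop unfolding is_copula_def by blast
  have rect: "\<And>a b c d. 0 \<le> a \<Longrightarrow> a \<le> b \<Longrightarrow> b \<le> 1 \<Longrightarrow> 0 \<le> c \<Longrightarrow> c \<le> d \<Longrightarrow> d \<le> 1 \<Longrightarrow>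
        C b d + C a c - C b c - C a d \<ge> 0"
    using cop unfolding is_copula_def by blast
  define g where "g t = t - C x t" for t
  define f where "f = delta_hat \<delta>"
  have step: "\<bar>f b - f a\<bar> \<le> 2*(g b - g a) - (f b - f a)"
    if "a \<in> {x..1}" "b \<in> {x..1}" "a \<le> b" for a b
  proof -
    have a: "x \<le> a" "a \<le> 1" and b: "x \<le> b" "b \<le> 1" using that by auto
    have r1: "C b b + C x a - C b a - C x b \<ge> 0" using rect[of x b a b] a b \<open>0 \<le> x\<close> that(3) by linarith
    have r2: "C b a + C a 0 - C b 0 - C a a \<ge> 0" using rect[of a b 0 a] a b \<open>0 \<le> x\<close> that(3) by linarith
    have r3: "C 1 b + C x a - C 1 a - C x b \<ge> 0" using rect[of x 1 a b] a b \<open>0 \<le> x\<close> that(3) by linarith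
    have z: "C a 0 = 0" "C b 0 = 0" "C 1 a = a" "C 1 b = b" using bd a b \<open>0 \<le> x\<close> by auto
    have d: "C a a = \<delta> a" "C b b = \<delta> b" using diag a b \<open>0 \<le> x\<close> by auto
    have "f b - f a \<le> g b - g a" "0 \<le> g b - g a"
      using r1 r2 r3 z d unfolding f_def g_def delta_hat_def by linarith+
    then show ?thesis by (simp add: abs_if)
  qed
  let ?S = "{(\<Sum>i\<in>{1..n}. \<bar>f (p i) - f (p (i - 1))\<bar>) | p n.
      p 0 = x \<and> p n = y \<and> (\<forall>i<n. p i < p (Suc i))}"
  define B where "B = 2*(g y - g x) - (f y - f x)"
  have ub: "s \<le> B" if sS: "s \<in> ?S" for s
  proof -
    obtain p n where s: "s = (\<Sum>i\<in>{1..n}. \<bar>f (p i) - f (p (i - 1))\<bar>)"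
      and p: "p 0 = x" "p n = y" "\<forall>i<n. p i < p (Suc i)" using sS by blast
    have mono: "\<forall>i<n. p i \<le> p (Suc i)" using p by (simp add: less_imp_le)
    have lo: "\<forall>i\<le>n. x \<le> p i"
    proof (intro allI impI)
      fix i assume "i \<le> n" then show "x \<le> p i"
      proof (induction i)
        case 0 then show ?case using p by simp
      next
        case (Suc i)
        then have "p i \<le> p (Suc i)" using mono by simp
        moreover have "x \<le> p i" using Suc by simp
        ultimately show ?case by linarith
      qed
    qed
    have hi0: "p (n - k) \<le> y" if "k \<le> n" for k
      using that
    proof (induction k)
      case 0 then show ?case using p by simp
    next
      case (Suc k)
      have lt: "n - Suc k < n" using Suc.prems by simp
      have "p (n - Suc k) \<le> p (Suc (n - Suc k))" using mono lt by blast
      moreover have "Suc (n - Suc k) = n - k" using Suc.prems by simp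
      moreover have "p (n - k) \<le> y" using Suc.IH Suc.prems by simp
      ultimately show ?case by simp
    qed
    have hi: "\<forall>i\<le>n. p i \<le> y"
    proof (intro allI impI)
      fix i assume i: "i \<le> n"
      have "p (n - (n - i)) \<le> y" by (rule hi0) simp
      then show "p i \<le> y" using i by simp
    qed
    have inS: "\<forall>i\<le>n. p i \<in> {x..1}" using lo hi \<open>y \<le> 1\<close> by auto
    show ?thesis unfolding s B_def using tele[where f=f and g=g and p=p and n=n and S="{x..1}", OF mono inS step] p by simp
  qed
  have ne: "?S \<noteq> {}"
  proof (cases "x = y")
    case True
    define q where "q = (\<lambda>i::nat. x)"
    have "(\<Sum>i\<in>{1..0}. \<bar>f (q i) - f (q (i - 1))\<bar>) \<in> ?S"
      using True by (intro CollectI exI[of _ q] exI[of _ 0]) (simp add: q_def)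
    then show ?thesis by (rule ex_in_conv[THEN iffD1, OF exI] ; simp)
  next
    case False
    define q where "q = (\<lambda>i::nat. if i = 0 then x else y)"
    have "(\<Sum>i\<in>{1..1}. \<bar>f (q i) - f (q (i - 1))\<bar>) \<in> ?S"
      using False \<open>x \<le> y\<close> unfolding q_def
      by (intro CollectI exI[of _ q] exI[of _ 1]) (auto simp: q_def)
    then show ?thesis by (rule ex_in_conv[THEN iffD1, OF exI] ; simp)
  qed
  have tv: "total_variation f x y \<le> B"
    unfolding total_variation_def by (rule cSup_least[OF ne]) (use ub in blast)
  have "C x x = \<delta> x" using diag \<open>0 \<le> x\<close> \<open>x \<le> y\<close> \<open>y \<le> 1\<close> by auto
  moreover have "delta_hat \<delta> x = x - \<delta> x" "delta_hat \<delta> y = y - \<delta> y"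
    by (simp_all add: delta_hat_def)
  ultimately show ?thesis using tv unfolding B_def g_def f_def by (simp add: field_simps)
qed

lemma transp_copula:
  assumes "is_copula C" shows "is_copula (\<lambda>u v. C v u)"
proof -
  have r: "\<And>a b c d. 0 \<le> a \<Longrightarrow> a \<le> b \<Longrightarrow> b \<le> 1 \<Longrightarrow> 0 \<le> c \<Longrightarrow> c \<le> d \<Longrightarrow> d \<le> 1 \<Longrightarrow>
        C b d + C a c - C b c - C a d \<ge> 0"
    and bd: "\<And>a. 0 \<le> a \<Longrightarrow> a \<le> 1 \<Longrightarrow> C a 0 = 0 \<and> C 0 a = 0 \<and> C a 1 = a \<and> C 1 a = a"
    using assms(1) unfolding is_copula_def by blast+
  have r': "C d b + C c a - C c b - C d a \<ge> 0" if "0 \<le> a" "a \<le> b" "b \<le> 1" "0 \<le> c" "c \<le> d" "d \<le> 1" for a b c d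
    using r[of c d a b] that by linarith
  show ?thesis unfolding is_copula_def using bd r' by blast
qed

lemma copula_le:
  assumes "is_copula C" "0 \<le> x" "x \<le> 1" "0 \<le> y" "y \<le> 1"
  shows "C x y \<le> x" "C x y \<le> y"
proof -
  have r: "\<And>a b c d. 0 \<le> a \<Longrightarrow> a \<le> b \<Longrightarrow> b \<le> 1 \<Longrightarrow> 0 \<le> c \<Longrightarrow> c \<le> d \<Longrightarrow> d \<le> 1 \<Longrightarrow>
        C b d + C a c - C b c - C a d \<ge> 0"
    and bd: "\<And>a. 0 \<le> a \<Longrightarrow> a \<le> 1 \<Longrightarrow> C a 0 = 0 \<and> C 0 a = 0 \<and> C a 1 = a \<and> C 1 a = a"
    using assms(1) unfolding is_copula_def by blast+
  show "C x y \<le> x" using r[of 0 x y 1] bd[of x] bd[of y] bd[of 0] bd[of 1] assms by simp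
  show "C x y \<le> y" using r[of x 1 0 y] bd[of x] bd[of y] bd[of 0] bd[of 1] assms by simp
qed

theorem proposition3p1:
  fixes \<delta> :: "real \<Rightarrow> real" and C :: "real \<Rightarrow> real \<Rightarrow> real" and x y :: real
  assumes "is_diagonal_section \<delta>"
    and "is_copula C"
    and "\<forall>t. 0 \<le> t \<and> t \<le> 1 \<longrightarrow> C t t = \<delta> t"
    and "0 \<le> x" "x \<le> 1" "0 \<le> y" "y \<le> 1"
  shows "C x y \<le> min x (min y (max x y - (delta_hat \<delta> x + delta_hat \<delta> y
            + total_variation (delta_hat \<delta>) (min x y) (max x y)) / 2))"
proof -
  have m: "C x y \<le> max x y - (delta_hat \<delta> x + delta_hat \<delta> y
            + total_variation (delta_hat \<delta>) (min x y) (max x y)) / 2"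
  proof (cases "x \<le> y")
    case True
    then show ?thesis using main_le[OF assms(2) assms(3), of x y] assms by simp
  next
    case False
    have "(\<lambda>u v. C v u) y x \<le> x - (delta_hat \<delta> y + delta_hat \<delta> x + total_variation (delta_hat \<delta>) y x) / 2"
      using main_le[OF transp_copula[OF assms(2)], of \<delta> y x] assms False by simp
    then show ?thesis using False by (simp add: add.commute)
  qed
  show ?thesis using m copula_le[OF assms(2) assms(4-7)] by simp
qed

end
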